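(* Let $n\ge 2$, $\gamma\in\,]0,1]$, and let $\varphi:\mathbb{R}^{n-1}\to\mathbb{R}$ be Hölder continuous with exponent $\gamma$, i.e. $|\varphi(\bar x)-\varphi(\bar y)|\le M|\bar x-\bar y|^{\gamma}$ for all $\bar x,\bar y\in\mathbb{R}^{n-1}$ and some $M\ge 0$; let $\mathrm{Lip}_\gamma\varphi$ denote the best such constant $M$. Let $$\Omega=\{x=(\bar x,x_n)\in\mathbb{R}^n:\ x_n<\varphi(\bar x)\}.$$ Then for all $x\in\overline{\Omega}$ and all $h>0$, $$C_\gamma(x,h,\mathrm{Lip}_\gamma\varphi)\subset\Omega .$$ Moreover, there exists $c>0$ depending only on $n$, $\gamma$ and $\mathrm{Lip}_\gamma\varphi$ such that $$|B_\gamma(x,r)\cap\Omega|\ge c\, r^{n_\gamma}\qquad\text{for all } x\in\overline{\Omega}\text{ and all } r>0 .$$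
   Context: Points of $\mathbb{R}^n$ are written $x=(\bar x,x_n)$ with $\bar x\in\mathbb{R}^{n-1}$, $x_n\in\mathbb{R}$. For $\gamma\in\,]0,1]$, $\delta_\gamma(x,y)=\max\{|\bar x-\bar y|^\gamma,|x_n-y_n|\}$ and $B_\gamma(x,r)=\{y\in\mathbb{R}^n:\delta_\gamma(x,y)<r\}=\{y:\ |\bar x-\bar y|<r^{1/\gamma},\ |x_n-y_n|<r\}$. Set $n_\gamma=\frac{n-1}{\gamma}+1$. For $x\in\mathbb{R}^n$, $h>0$, $M\ge0$, the cusp with exponent $\gamma$, vertex $x$, height $h$ and opening $M$ is $C_\gamma(x,h,M)=\{y\in\mathbb{R}^n:\ x_n-h<y_n<x_n-M|\bar y-\bar x|^\gamma\}$. $|\cdot|$ of a set denotes Lebesgue measure. *)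

theory Defs
  imports "HOL-Analysis.Analysis"
begin

text \<open>Points of R^n are pairs (xbar, x_n) :: 'a \<times> real with 'a a Euclidean space of
  dimension n-1 (so n = DIM('a) + 1 \<ge> 2 automatically).\<close>

definition holder_cont :: "real \<Rightarrow> ('a::euclidean_space \<Rightarrow> real) \<Rightarrow> bool" where
  "holder_cont \<gamma> \<phi> \<longleftrightarrow> (\<exists>M\<ge>0. \<forall>x y. \<bar>\<phi> x - \<phi> y\<bar> \<le> M * norm (x - y) powr \<gamma>)"

definition lip_gamma :: "real \<Rightarrow> ('a::euclidean_space \<Rightarrow> real) \<Rightarrow> real" where
  "lip_gamma \<gamma> \<phi> = Inf {M. M \<ge> 0 \<and> (\<forall>x y. \<bar>\<phi> x - \<phi> y\<bar> \<le> M * norm (x - y) powr \<gamma>)}"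

definition subgraph :: "('a::euclidean_space \<Rightarrow> real) \<Rightarrow> ('a \<times> real) set" where
  "subgraph \<phi> = {x. snd x < \<phi> (fst x)}"

definition delta_gamma :: "real \<Rightarrow> 'a::euclidean_space \<times> real \<Rightarrow> 'a \<times> real \<Rightarrow> real" where
  "delta_gamma \<gamma> x y = max (norm (fst x - fst y) powr \<gamma>) \<bar>snd x - snd y\<bar>"

definition ball_gamma :: "real \<Rightarrow> 'a::euclidean_space \<times> real \<Rightarrow> real \<Rightarrow> ('a \<times> real) set" where
  "ball_gamma \<gamma> x r = {y. delta_gamma \<gamma> x y < r}"

definition cusp :: "real \<Rightarrow> 'a::euclidean_space \<times> real \<Rightarrow> real \<Rightarrow> real \<Rightarrow> ('a \<times> real) set" where
  "cusp \<gamma> x h M = {y. snd x - h < snd y \<and> snd y < snd x - M * norm (fst y - fst x) powr \<gamma>}"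

definition n_gamma :: "real \<Rightarrow> 'a::euclidean_space itself \<Rightarrow> real" where
  "n_gamma \<gamma> _ = real DIM('a) / \<gamma> + 1"

end

theory Submission
  imports Defs
begin

lemma holder_isCont:
  fixes \<phi> :: "'a::euclidean_space \<Rightarrow> real"
  assumes g: "0 < \<gamma>" and M: "\<forall>x y. \<bar>\<phi> x - \<phi> y\<bar> \<le> M * norm (x - y) powr \<gamma>"
  shows "continuous_on UNIV \<phi>"
proof (rule continuous_at_imp_continuous_on, intro ballI)
  fix x :: 'a
  have n: "((\<lambda>y. norm (y - x)) \<longlongrightarrow> 0) (at x)"
    using LIM_zero[OF tendsto_ident_at[of x UNIV]] tendsto_norm_zero by blast
  have "((\<lambda>y. norm (y - x) powr \<gamma>) \<longlongrightarrow> 0) (at x)"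
    by (rule tendsto_zero_powrI[OF n tendsto_const]) (use g in auto)
  then have "((\<lambda>y. M * norm (y - x) powr \<gamma>) \<longlongrightarrow> 0) (at x)"
    using tendsto_mult_right_zero by blast
  then have "((\<lambda>y. \<phi> y - \<phi> x) \<longlongrightarrow> 0) (at x)"
    by (rule Lim_null_comparison[rotated]) (use M in auto)
  then show "isCont \<phi> x"
    unfolding isCont_def by (rule LIM_zero_cancel)
qed

lemma lip_valid:
  fixes \<phi> :: "'a::euclidean_space \<Rightarrow> real"
  assumes "holder_cont \<gamma> \<phi>"
  shows "\<bar>\<phi> x - \<phi> y\<bar> \<le> lip_gamma \<gamma> \<phi> * norm (x - y) powr \<gamma>" and "lip_gamma \<gamma> \<phi> \<ge> 0"
proof -
  define S where "S = {M. M \<ge> 0 \<and> (\<forall>x y. \<bar>\<phi> x - \<phi> y\<bar> \<le> M * norm (x - y) powr \<gamma>)}"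
  have ne: "S \<noteq> {}" using assms unfolding holder_cont_def S_def by auto
  have L: "lip_gamma \<gamma> \<phi> = Inf S" unfolding lip_gamma_def S_def ..
  show "lip_gamma \<gamma> \<phi> \<ge> 0" unfolding L by (rule cInf_greatest[OF ne]) (auto simp: S_def)
  show "\<bar>\<phi> x - \<phi> y\<bar> \<le> lip_gamma \<gamma> \<phi> * norm (x - y) powr \<gamma>"
  proof (cases "norm (x - y) powr \<gamma> = 0")
    case True
    obtain M where "M \<in> S" using ne by auto
    then show ?thesis using True by (auto simp: S_def)
  next
    case False
    then have t: "norm (x - y) powr \<gamma> > 0" by simp
    have "\<bar>\<phi> x - \<phi> y\<bar> / norm (x - y) powr \<gamma> \<le> Inf S"
      by (rule cInf_greatest[OF ne]) (use t in \<open>auto simp: S_def divide_le_eq\<close>)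
    then show ?thesis unfolding L using t by (simp add: divide_le_eq)
  qed
qed

lemma closure_sub:
  fixes \<phi> :: "'a::euclidean_space \<Rightarrow> real"
  assumes "continuous_on UNIV \<phi>" "x \<in> closure (subgraph \<phi>)"
  shows "snd x \<le> \<phi> (fst x)"
proof -
  have "closed {x :: 'a \<times> real. snd x \<le> \<phi> (fst x)}"
    by (rule closed_Collect_le) (auto intro!: continuous_intros continuous_on_compose2[OF assms(1)])
  then have "closure (subgraph \<phi>) \<subseteq> {x. snd x \<le> \<phi> (fst x)}"
    by (intro closure_minimal) (auto simp: subgraph_def)
  then show ?thesis using assms(2) by auto
qed



theorem lemma2p1:
  fixes \<gamma> L :: real
  assumes "0 < \<gamma>" "\<gamma> \<le> 1" "L \<ge> 0"
  shows "(\<forall>\<phi>::'a::euclidean_space \<Rightarrow> real. holder_cont \<gamma> \<phi> \<longrightarrow>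
            (\<forall>x\<in>closure (subgraph \<phi>). \<forall>h>0. cusp \<gamma> x h (lip_gamma \<gamma> \<phi>) \<subseteq> subgraph \<phi>))
       \<and> (\<exists>c>0. \<forall>\<phi>::'a \<Rightarrow> real. holder_cont \<gamma> \<phi> \<and> lip_gamma \<gamma> \<phi> = L \<longrightarrow>
            (\<forall>x\<in>closure (subgraph \<phi>). \<forall>r>0.
               emeasure lborel (ball_gamma \<gamma> x r \<inter> subgraph \<phi>)
                 \<ge> ennreal (c * r powr n_gamma \<gamma> TYPE('a))))"
proof -
  have cont: "continuous_on UNIV \<phi>" if "holder_cont \<gamma> \<phi>" for \<phi> :: "'a \<Rightarrow> real"
    using lip_valid(1)[OF that] holder_isCont[OF assms(1)] by blast
  show ?thesis
  proof
  show "\<forall>\<phi>::'a::euclidean_space \<Rightarrow> real. holder_cont \<gamma> \<phi> \<longrightarrow>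
            (\<forall>x\<in>closure (subgraph \<phi>). \<forall>h>0. cusp \<gamma> x h (lip_gamma \<gamma> \<phi>) \<subseteq> subgraph \<phi>)"
  proof (intro allI impI ballI subsetI)
    fix \<phi> :: "'a \<Rightarrow> real" and x h y
    assume H: "holder_cont \<gamma> \<phi>" and x: "x \<in> closure (subgraph \<phi>)" and y: "y \<in> cusp \<gamma> x h (lip_gamma \<gamma> \<phi>)"
    have "snd x \<le> \<phi> (fst x)" using closure_sub[OF cont[OF H] x] .
    moreover have "\<phi> (fst x) - \<phi> (fst y) \<le> lip_gamma \<gamma> \<phi> * norm (fst y - fst x) powr \<gamma>"
      using lip_valid(1)[OF H, of "fst x" "fst y"] by (simp add: norm_minus_commute)
    ultimately show "y \<in> subgraph \<phi>" using y by (auto simp: cusp_def subgraph_def)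
  qed
next
  define d where "d = DIM('a)"
  define K where "K = 2 * (L + 1)"
  have K: "K > 0" using assms(3) by (simp add: K_def)
  define c where "c = unit_ball_vol (real d) / K powr (real d / \<gamma>) / 2"
  have c: "c > 0" using K by (simp add: c_def)
  show "\<exists>c>0. \<forall>\<phi>::'a \<Rightarrow> real. holder_cont \<gamma> \<phi> \<and> lip_gamma \<gamma> \<phi> = L \<longrightarrow>
            (\<forall>x\<in>closure (subgraph \<phi>). \<forall>r>0.
               emeasure lborel (ball_gamma \<gamma> x r \<inter> subgraph \<phi>)
                 \<ge> ennreal (c * r powr n_gamma \<gamma> TYPE('a)))"
  proof (intro exI[of _ c] conjI c allI impI ballI)
    fix \<phi> :: "'a \<Rightarrow> real" and x :: "'a \<times> real" and r :: real
    assume H: "holder_cont \<gamma> \<phi> \<and> lip_gamma \<gamma> \<phi> = L" and x: "x \<in> closure (subgraph \<phi>)" and r: "r > 0"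
    have x': "snd x \<le> \<phi> (fst x)" using closure_sub[OF cont x] H by blast
    have hol: "\<bar>\<phi> a - \<phi> b\<bar> \<le> L * norm (a - b) powr \<gamma>" for a b
      using lip_valid(1)[of \<gamma> \<phi> a b] H by simp
    define \<rho> where "\<rho> = (r / K) powr (1 / \<gamma>)"
    have rho: "\<rho> powr \<gamma> = r / K" using assms(1) r K by (simp add: \<rho>_def powr_powr)
    define A where "A = ball (fst x) \<rho> \<times> {snd x - r <..< snd x - r / 2}"
    have sub: "A \<subseteq> ball_gamma \<gamma> x r \<inter> subgraph \<phi>"
    proof
      fix y assume "y \<in> A"
      then have y1: "norm (fst y - fst x) < \<rho>" and y2: "snd x - r < snd y" "snd y < snd x - r / 2"
        by (auto simp: A_def dist_norm norm_minus_commute)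
      have "norm (fst y - fst x) powr \<gamma> \<le> \<rho> powr \<gamma>"
        using y1 assms(1) by (intro powr_mono2) auto
      then have p: "norm (fst y - fst x) powr \<gamma> \<le> r / K" using rho by simp
      have "r / K < r" using r assms(3) by (simp add: K_def divide_less_eq)
      then have "y \<in> ball_gamma \<gamma> x r"
        using p y2 r by (auto simp: ball_gamma_def delta_gamma_def norm_minus_commute)
      moreover have "L * (r / K) \<le> r / 2"
        using r assms(3) by (simp add: K_def field_simps)
      then have "L * norm (fst y - fst x) powr \<gamma> \<le> r / 2"
        using p assms(3) by (meson mult_left_mono order_trans)
      then have "y \<in> subgraph \<phi>"
        using hol[of "fst x" "fst y"] x' y2 by (auto simp: subgraph_def norm_minus_commute)
      ultimately show "y \<in> ball_gamma \<gamma> x r \<inter> subgraph \<phi>" by blast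
    qed
    have "emeasure lborel A = emeasure (lborel \<Otimes>\<^sub>M lborel) A" by (simp add: lborel_prod)
    also have "\<dots> = emeasure lborel (ball (fst x) \<rho>) * emeasure lborel {snd x - r <..< snd x - r / 2}"
      unfolding A_def by (rule sigma_finite_measure.emeasure_pair_measure_Times) (auto intro: sigma_finite_lborel)
    also have "\<dots> = ennreal (unit_ball_vol (real d) * \<rho> ^ d) * ennreal (r / 2)"
      using emeasure_ball[of \<rho> "fst x"] r emeasure_lborel_Ioo[of "snd x - r" "snd x - r / 2"] by (simp add: \<rho>_def d_def)
    also have "\<dots> = ennreal (unit_ball_vol (real d) * \<rho> ^ d * (r / 2))"
      using r by (subst ennreal_mult[symmetric]) (auto simp: \<rho>_def)
    also have "unit_ball_vol (real d) * \<rho> ^ d * (r / 2) = c * r powr n_gamma \<gamma> TYPE('a)"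
    proof -
      have "\<rho> ^ d = (r / K) powr (real d / \<gamma>)"
        unfolding \<rho>_def using r K by (simp add: powr_realpow[symmetric] powr_powr)
      also have "\<dots> = r powr (real d / \<gamma>) / K powr (real d / \<gamma>)"
        using r K by (simp add: powr_divide)
      finally have e: "\<rho> ^ d = r powr (real d / \<gamma>) / K powr (real d / \<gamma>)" .
      have "r powr n_gamma \<gamma> TYPE('a) = r powr (real d / \<gamma>) * r"
        using r by (simp add: n_gamma_def d_def powr_add)
      then show ?thesis unfolding e c_def by simp
    qed
    finally have "emeasure lborel A = ennreal (c * r powr n_gamma \<gamma> TYPE('a))" .
    moreover have "emeasure lborel A \<le> emeasure lborel (ball_gamma \<gamma> x r \<inter> subgraph \<phi>)"
    proof (rule emeasure_mono[OF sub])
      have o1: "open (subgraph \<phi>)" unfolding subgraph_def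
        by (rule open_Collect_less) (auto intro!: continuous_intros continuous_on_compose2[OF cont[of \<phi>]] simp: H)
      have "continuous_on UNIV (\<lambda>y::'a \<times> real. norm (fst x - fst y) powr \<gamma>)"
        by (rule continuous_on_powr') (use assms(1) in \<open>auto intro!: continuous_intros\<close>)
      then have "continuous_on UNIV (\<lambda>y::'a \<times> real. max (norm (fst x - fst y) powr \<gamma>) \<bar>snd x - snd y\<bar>)"
        by (intro continuous_on_max) (auto intro!: continuous_intros)
      then have "open {y. max (norm (fst x - fst y) powr \<gamma>) \<bar>snd x - snd y\<bar> < r}"
        by (intro open_Collect_less continuous_on_const)
      then have "open (ball_gamma \<gamma> x r)" unfolding ball_gamma_def delta_gamma_def .
      with o1 show "ball_gamma \<gamma> x r \<inter> subgraph \<phi> \<in> sets lborel" by auto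
    qed
    ultimately show "emeasure lborel (ball_gamma \<gamma> x r \<inter> subgraph \<phi>) \<ge> ennreal (c * r powr n_gamma \<gamma> TYPE('a))"
      by simp
  qed
qed
  qed

end
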